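(* A finite group $G$ is $2'$-simple if and only if for every nontrivial complex representation $\rho:G\to\mathrm{GL}_d(\mathbb{C})$ there exists $a\in G$ such that $-1$ is an eigenvalue of $\rho(a)$.
   Context: A finite group $G$ is called $2'$-simple if it has no proper normal subgroup of odd index, equivalently $G$ has no nontrivial quotient of odd order, equivalently $G$ is generated by its Sylow $2$-subgroups. *)

theory Defs
  imports "HOL-Algebra.Coset" "Jordan_Normal_Form.Char_Poly"
begin

definition two'_simple :: "('a, 'b) monoid_scheme \<Rightarrow> bool" where
  "two'_simple G \<longleftrightarrow>
     (\<forall>H. normal H G \<and> odd (card (rcosets\<^bsub>G\<^esub> H)) \<longrightarrow> H = carrier G)"

definition complex_rep :: "('a, 'b) monoid_scheme \<Rightarrow> nat \<Rightarrow> ('a \<Rightarrow> complex mat) \<Rightarrow> bool" where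
  "complex_rep G d \<rho> \<longleftrightarrow>
     (\<forall>g \<in> carrier G. \<rho> g \<in> carrier_mat d d \<and> invertible_mat (\<rho> g)) \<and>
     (\<forall>g \<in> carrier G. \<forall>h \<in> carrier G. \<rho> (g \<otimes>\<^bsub>G\<^esub> h) = \<rho> g * \<rho> h)"

definition nontrivial_rep :: "('a, 'b) monoid_scheme \<Rightarrow> nat \<Rightarrow> ('a \<Rightarrow> complex mat) \<Rightarrow> bool" where
  "nontrivial_rep G d \<rho> \<longleftrightarrow> (\<exists>g \<in> carrier G. \<rho> g \<noteq> 1\<^sub>m d)"

end

theory Submission
  imports Defs "HOL-Algebra.Sylow" "HOL-Algebra.Multiplicative_Group"
begin

lemma inv_ev:
  fixes A :: "complex mat"
  assumes A: "A \<in> carrier_mat d d" and AA: "A * A = 1\<^sub>m d" and ne: "A \<noteq> 1\<^sub>m d"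
  shows "eigenvalue A (-1)"
proof -
  obtain i j where ij: "i < d" "j < d" "A $$ (i,j) \<noteq> 1\<^sub>m d $$ (i,j)"
    using ne A by (metis carrier_matD(1) carrier_matD(2) eq_matI index_one_mat(2) index_one_mat(3))
  define v :: "complex vec" where "v = unit_vec d j"
  define w where "w = A *\<^sub>v v - v"
  have v: "v \<in> carrier_vec d" unfolding v_def by simp
  have Av: "A *\<^sub>v v \<in> carrier_vec d" using A v by simp
  have w: "w \<in> carrier_vec d" unfolding w_def using Av v by simp
  have "w $ i = A $$ (i,j) - 1\<^sub>m d $$ (i,j)"
    unfolding w_def v_def using ij A by (simp add: mult_mat_vec_def scalar_prod_right_unit)
  then have "w $ i \<noteq> 0" using ij by simp
  then have w0: "w \<noteq> 0\<^sub>v d" using ij by auto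
  have "A *\<^sub>v w = A *\<^sub>v (A *\<^sub>v v) - A *\<^sub>v v"
    unfolding w_def using A v Av by (simp add: mult_minus_distrib_mat_vec)
  also have "A *\<^sub>v (A *\<^sub>v v) = v"
    using A v AA by (metis assoc_mult_mat_vec one_mult_mat_vec)
  finally have "A *\<^sub>v w = (-1) \<cdot>\<^sub>v w"
    unfolding w_def using v Av A by (intro eq_vecI) auto
  then show ?thesis unfolding eigenvalue_def eigenvector_def using w w0 A by auto
qed

lemma rho_one:
  fixes G :: "('a, 'b) monoid_scheme" (structure)
  assumes grp: "group G" and rep: "complex_rep G d \<rho>"
  shows "\<rho> \<one>\<^bsub>G\<^esub> = 1\<^sub>m d"
proof -
  interpret group G by fact
  have c: "\<rho> \<one> \<in> carrier_mat d d" "invertible_mat (\<rho> \<one>)" using rep unfolding complex_rep_def by auto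
  have sq: "\<rho> \<one> * \<rho> \<one> = \<rho> \<one>" using rep unfolding complex_rep_def by (metis one_closed l_one)
  obtain B where B: "\<rho> \<one> * B = 1\<^sub>m d" "B * \<rho> \<one> = 1\<^sub>m (dim_row B)"
    using c unfolding invertible_mat_def inverts_mat_def by auto
  have Bc: "B \<in> carrier_mat d d"
    using B c by (metis carrier_matD(1) carrier_matD(2) carrier_matI index_mult_mat(2) index_mult_mat(3) index_one_mat(2) index_one_mat(3))
  have "\<rho> \<one> = (B * \<rho> \<one>) * \<rho> \<one>" using B Bc c by simp
  also have "\<dots> = B * (\<rho> \<one> * \<rho> \<one>)" using Bc c by (simp add: assoc_mult_mat)
  also have "\<dots> = 1\<^sub>m d" using sq B Bc by simp
  finally show ?thesis .
qed

lemma dir1: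
  fixes G :: "('a, 'b) monoid_scheme" (structure)
  assumes grp: "group G" and fin: "finite (carrier G)" and ts: "two'_simple G"
    and rep: "complex_rep G d \<rho>" and nt: "nontrivial_rep G d \<rho>"
  shows "\<exists>a\<in>carrier G. eigenvalue (\<rho> a) (-1)"
proof (rule ccontr)
  assume noev: "\<not> (\<exists>a\<in>carrier G. eigenvalue (\<rho> a) (-1))"
  interpret group G by fact
  have rc: "\<And>g. g \<in> carrier G \<Longrightarrow> \<rho> g \<in> carrier_mat d d" using rep unfolding complex_rep_def by auto
  have rm: "\<And>g h. g \<in> carrier G \<Longrightarrow> h \<in> carrier G \<Longrightarrow> \<rho> (g \<otimes> h) = \<rho> g * \<rho> h"
    using rep unfolding complex_rep_def by auto
  have r1: "\<rho> \<one> = 1\<^sub>m d" using rho_one[OF grp rep] .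
  have two: "\<And>g. g \<in> carrier G \<Longrightarrow> g [^] ((2::nat)^k) = \<one> \<Longrightarrow> \<rho> g = 1\<^sub>m d" for k
  proof (induction k)
    case 0
    then show ?case using r1 by simp
  next
    case (Suc k)
    have gg: "g \<otimes> g \<in> carrier G" using Suc by simp
    have "(g \<otimes> g) [^] ((2::nat)^k) = g [^] ((2::nat) * 2^k)"
    proof -
      have "g \<otimes> g = g [^] (2::nat)" using Suc.prems(1) by (simp add: numeral_2_eq_2)
      then show ?thesis using Suc.prems(1) by (simp add: nat_pow_pow)
    qed
    then have "(g \<otimes> g) [^] ((2::nat)^k) = \<one>" using Suc.prems by simp
    then have "\<rho> (g \<otimes> g) = 1\<^sub>m d" using Suc.IH gg by blast
    then have AA: "\<rho> g * \<rho> g = 1\<^sub>m d" using rm Suc.prems by simp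
    show ?case
    proof (rule ccontr)
      assume "\<rho> g \<noteq> 1\<^sub>m d"
      then have "eigenvalue (\<rho> g) (-1)" using inv_ev[OF rc[OF Suc.prems(1)] AA] by blast
      then show False using noev Suc.prems by blast
    qed
  qed
  define N where "N = {g \<in> carrier G. \<rho> g = 1\<^sub>m d}"
  have sN: "subgroup N G"
  proof
    show "N \<subseteq> carrier G" unfolding N_def by auto
    show "\<one> \<in> N" unfolding N_def using r1 by auto
    fix x y assume "x \<in> N" "y \<in> N"
    then show "x \<otimes> y \<in> N" unfolding N_def using rm by auto
  next
    fix x assume x: "x \<in> N"
    then have xc: "x \<in> carrier G" unfolding N_def by auto
    have "\<rho> (inv x) = \<rho> x * \<rho> (inv x)" using x rc[of "inv x"] xc unfolding N_def by simp
    also have "\<dots> = 1\<^sub>m d" using rm[of x "inv x"] xc r1 by simp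
    finally show "inv x \<in> N" unfolding N_def using xc by simp
  qed
  have nN: "normal N G"
  proof (rule normal_inv_iff[THEN iffD2], rule conjI, fact sN, intro ballI)
    fix x h assume x: "x \<in> carrier G" and h: "h \<in> N"
    then have hc: "h \<in> carrier G" unfolding N_def by auto
    have "\<rho> (x \<otimes> h \<otimes> inv x) = \<rho> x * \<rho> h * \<rho> (inv x)" using rm x hc by simp
    also have "\<dots> = \<rho> x * \<rho> (inv x)" using h rc[OF x] unfolding N_def by simp
    also have "\<dots> = 1\<^sub>m d" using rm[of x "inv x"] x r1 by simp
    finally show "x \<otimes> h \<otimes> inv x \<in> N" unfolding N_def using x hc by simp
  qed
  define a where "a = multiplicity (2::nat) (Coset.order G)"
  define m where "m = Coset.order G div 2^a"
  have opos: "Coset.order G > 0" using fin one_closed unfolding Coset.order_def by (auto simp add: card_gt_0_iff)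
  have om: "Coset.order G = 2^a * m" unfolding m_def a_def by (simp add: multiplicity_dvd)
  have modd: "odd m"
  proof
    assume "even m"
    then have "2^(Suc a) dvd Coset.order G" using om by auto
    then have "Suc a \<le> a" unfolding a_def using opos by (intro multiplicity_geI) auto
    then show False by simp
  qed
  obtain P where sP: "subgroup P G" and cP: "card P = 2^a"
    using sylow_thm[of 2 G a m] grp fin om by auto
  have PN: "P \<subseteq> N"
  proof
    fix g assume g: "g \<in> P"
    interpret P: group "G\<lparr>carrier := P\<rparr>" using subgroup.subgroup_is_group[OF sP grp] .
    have "g [^]\<^bsub>G\<lparr>carrier := P\<rparr>\<^esub> Coset.order (G\<lparr>carrier := P\<rparr>) = \<one>\<^bsub>G\<lparr>carrier := P\<rparr>\<^esub>"
      using P.pow_order_eq_1 g by simp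
    then have "g [^] ((2::nat)^a) = \<one>" using cP by (simp add: Coset.order_def nat_pow_consistent[symmetric])
    moreover have "g \<in> carrier G" using g subgroup.subset[OF sP] by auto
    ultimately show "g \<in> N" unfolding N_def using two by blast
  qed
  interpret NG: group "G\<lparr>carrier := N\<rparr>" using subgroup.subgroup_is_group[OF sN grp] .
  have "subgroup P (G\<lparr>carrier := N\<rparr>)" using subgroup_incl[OF sP sN PN] .
  then have "card P dvd card N" using NG.lagrange by (metis dvd_triv_right Coset.order_def partial_object.select_convs(1) partial_object.surjective partial_object.update_convs(1))
  then obtain t where t: "card N = 2^a * t" using cP by auto
  have "card (rcosets N) * card N = Coset.order G" using lagrange[OF sN] .
  then have "card (rcosets N) * t = m" using om t by simp
  then have "odd (card (rcosets N))" using modd by auto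
  then have "N = carrier G" using ts nN unfolding two'_simple_def by blast
  then show False using nt unfolding nontrivial_rep_def N_def by auto
qed

lemma dir2:
  fixes G :: "('a, 'b) monoid_scheme" (structure)
  assumes grp: "group G" and fin: "finite (carrier G)" and nts: "\<not> two'_simple G"
  shows "\<exists>d \<rho>. complex_rep G d \<rho> \<and> nontrivial_rep G d \<rho> \<and> \<not> (\<exists>a\<in>carrier G. eigenvalue (\<rho> a) (-1))"
proof -
  interpret group G by fact
  obtain H where nH: "normal H G" and oddH: "odd (card (rcosets H))" and HG: "H \<noteq> carrier G"
    using nts unfolding two'_simple_def by blast
  interpret normal H G by fact
  have sH: "subgroup H G" by (rule is_subgroup)
  define n where "n = card (rcosets H)"
  have finR: "finite (rcosets H)"
    using fin unfolding RCOSETS_def by (auto intro: finite_UN_I)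
  obtain c where c: "bij_betw c {0..<n} (rcosets H)"
    using ex_bij_betw_nat_finite[OF finR] unfolding n_def by blast
  have cin: "\<And>i. i < n \<Longrightarrow> c i \<in> rcosets H" using c bij_betwE by fastforce
  have cinj: "\<And>i j. i < n \<Longrightarrow> j < n \<Longrightarrow> c i = c j \<Longrightarrow> i = j"
    using c unfolding bij_betw_def inj_on_def by auto
  have csurj: "\<exists>j<n. c j = C" if "C \<in> rcosets H" for C
  proof -
    have "C \<in> c ` {0..<n}" using that c unfolding bij_betw_def by simp
    then show ?thesis by auto
  qed
  have act: "g <# C = H #> (g \<otimes> x)" if "g \<in> carrier G" "x \<in> carrier G" "C = H #> x" for g x C
  proof -
    have "g <# C = g <# (x <# H)" using that coset_eq by simp
    also have "\<dots> = (g \<otimes> x) <# H" using that lcos_m_assoc subset by simp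
    also have "\<dots> = H #> (g \<otimes> x)" using that coset_eq by simp
    finally show ?thesis .
  qed
  have actin: "g <# C \<in> rcosets H" if "g \<in> carrier G" "C \<in> rcosets H" for g C
    using that act rcosetsI subset unfolding RCOSETS_def by auto
  have actmul: "(g \<otimes> h) <# C = g <# (h <# C)" if "g \<in> carrier G" "h \<in> carrier G" "C \<in> rcosets H" for g h C
    using that lcos_m_assoc[of C g h] subset unfolding RCOSETS_def r_coset_def by auto
  have actH: "h <# C = C" if hH: "h \<in> H" and CH: "C \<in> rcosets H" for h C
  proof -
    obtain x where x: "x \<in> carrier G" "C = H #> x" using CH unfolding RCOSETS_def by auto
    have hc: "h \<in> carrier G" using hH subset by auto
    have "h <# C = H #> (h \<otimes> x)" using act[OF hc x] .
    also have "\<dots> = (H #> h) #> x" using coset_mult_assoc subset hc x by simp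
    also have "\<dots> = C" using rcos_const[OF grp hH] x by simp
    finally show ?thesis .
  qed
  define \<rho> where "\<rho> g = mat n n (\<lambda>(i,j). if c i = g <# c j then 1 else (0::complex))" for g
  have rc: "\<rho> g \<in> carrier_mat n n" for g unfolding \<rho>_def by simp
  have rH: "\<rho> h = 1\<^sub>m n" if "h \<in> H" for h
    unfolding \<rho>_def using actH[OF that] cin cinj by (intro eq_matI) auto
  have rm: "\<rho> (g \<otimes> h) = \<rho> g * \<rho> h" if g: "g \<in> carrier G" and h: "h \<in> carrier G" for g h
  proof (rule eq_matI)
    fix i k assume i: "i < dim_row (\<rho> g * \<rho> h)" and k: "k < dim_col (\<rho> g * \<rho> h)"
    then have i: "i < n" and k: "k < n" by (simp_all add: \<rho>_def)
    obtain j0 where j0: "j0 < n" "c j0 = h <# c k" using csurj actin[OF h cin[OF k]] by blast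
    have "(\<rho> g * \<rho> h) $$ (i,k) = (\<Sum>j\<in>{0..<n}. (\<rho> g) $$ (i,j) * (\<rho> h) $$ (j,k))"
    proof -
      have rd: "dim_row (\<rho> x) = n" "dim_col (\<rho> x) = n" for x unfolding \<rho>_def by simp_all
      have "(\<rho> g * \<rho> h) $$ (i,k) = row (\<rho> g) i \<bullet> col (\<rho> h) k" using i k by (simp add: rd)
      also have "\<dots> = (\<Sum>j\<in>{0..<n}. (\<rho> g) $$ (i,j) * (\<rho> h) $$ (j,k))"
        unfolding scalar_prod_def using i k by (auto simp: rd intro!: sum.cong)
      finally show ?thesis .
    qed
    also have "\<dots> = (\<Sum>j\<in>{0..<n}. if j = j0 then (if c i = g <# c j0 then 1 else 0) else 0)"
    proof (rule sum.cong[OF refl])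
      fix j assume j: "j \<in> {0..<n}"
      show "(\<rho> g) $$ (i,j) * (\<rho> h) $$ (j,k) = (if j = j0 then (if c i = g <# c j0 then 1 else 0) else 0)"
      proof -
        have jn: "j < n" using j by simp
        have e1: "\<rho> g $$ (i,j) = (if c i = g <# c j then 1 else 0)" using i jn by (simp add: \<rho>_def)
        have e2: "\<rho> h $$ (j,k) = (if c j = h <# c k then 1 else 0)" using k jn by (simp add: \<rho>_def)
        show ?thesis
        proof (cases "j = j0")
          case True
          then show ?thesis using e1 e2 j0 by simp
        next
          case False
          then have "c j \<noteq> h <# c k" using cinj[OF jn j0(1)] j0(2) by metis
          then show ?thesis using e2 False by simp
        qed
      qed
    qed
    also have "\<dots> = (if c i = g <# c j0 then 1 else 0)" using j0 by simp
    also have "\<dots> = \<rho> (g \<otimes> h) $$ (i,k)"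
      unfolding \<rho>_def using i k j0 actmul[OF g h cin[OF k]] by simp
    finally show "\<rho> (g \<otimes> h) $$ (i,k) = (\<rho> g * \<rho> h) $$ (i,k)" by simp
  qed (simp_all add: \<rho>_def)
  have r1: "\<rho> \<one> = 1\<^sub>m n" using rH[OF one_closed] .
  have rep: "complex_rep G n \<rho>"
    unfolding complex_rep_def
  proof (intro conjI ballI)
    fix g assume g: "g \<in> carrier G"
    show "\<rho> g \<in> carrier_mat n n" by (rule rc)
    have "\<rho> g * \<rho> (inv g) = 1\<^sub>m n" "\<rho> (inv g) * \<rho> g = 1\<^sub>m n"
      using rm[of g "inv g"] rm[of "inv g" g] g r1 by auto
    then show "invertible_mat (\<rho> g)"
      unfolding invertible_mat_def inverts_mat_def square_mat.simps using rc[of g] rc[of "inv g"] by auto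
  next
    fix g h assume "g \<in> carrier G" "h \<in> carrier G"
    then show "\<rho> (g \<otimes> h) = \<rho> g * \<rho> h" by (rule rm)
  qed
  have nt: "nontrivial_rep G n \<rho>"
  proof -
    obtain g where g: "g \<in> carrier G" "g \<notin> H" using HG subset by blast
    have "H \<in> rcosets H" using rcosetsI[of H "\<one>"] subset coset_mult_one[OF subset] by simp
    then obtain i0 where i0: "i0 < n" "c i0 = H" using csurj by blast
    have "g <# H = H #> g" using coset_eq g by simp
    moreover have "g \<in> H #> g" using rcos_self[OF g(1) sH] .
    ultimately have "c i0 \<noteq> g <# c i0" using g i0 by auto
    then have "\<rho> g $$ (i0,i0) = 0" unfolding \<rho>_def using i0 by simp
    moreover have "1\<^sub>m n $$ (i0,i0) = (1::complex)" using i0 by simp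
    ultimately show ?thesis unfolding nontrivial_rep_def using g by force
  qed
  have powH: "a [^] n \<in> H" if a: "a \<in> carrier G" for a
  proof -
    interpret F: group "G Mod H" by (rule factorgroup_is_group)
    have pw: "(H #> a) [^]\<^bsub>G Mod H\<^esub> k = H #> (a [^] k)" for k :: nat
    proof (induction k)
      case 0
      then show ?case using coset_mult_one[OF subset] by (simp add: FactGroup_def)
    next
      case (Suc k)
      then show ?case using rcos_sum[OF nat_pow_closed[OF a] a] by (simp add: FactGroup_def)
    qed
    have "H #> a \<in> carrier (G Mod H)" using rcosetsI[OF subset a] by (simp add: FactGroup_def)
    then have "(H #> a) [^]\<^bsub>G Mod H\<^esub> Coset.order (G Mod H) = \<one>\<^bsub>G Mod H\<^esub>" by (rule F.pow_order_eq_1)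
    moreover have "Coset.order (G Mod H) = n" unfolding n_def Coset.order_def by (simp add: FactGroup_def)
    ultimately have "H #> (a [^] n) = H" using pw by (simp add: FactGroup_def)
    moreover have "a [^] n \<in> H #> (a [^] n)" using rcos_self[OF nat_pow_closed[OF a, where n=n] sH] .
    ultimately show ?thesis by simp
  qed
  have noev: "\<not> eigenvalue (\<rho> a) (-1)" if a: "a \<in> carrier G" for a
  proof
    assume "eigenvalue (\<rho> a) (-1)"
    then obtain v where v: "v \<in> carrier_vec n" "v \<noteq> 0\<^sub>v n" and av: "\<rho> a *\<^sub>v v = (-1) \<cdot>\<^sub>v v"
      unfolding eigenvalue_def eigenvector_def using rc[of a] by auto
    have pk: "\<rho> (a [^] k) *\<^sub>v v = ((-1)^k) \<cdot>\<^sub>v v" for k :: nat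
    proof (induction k)
      case 0
      then show ?case using r1 v by simp
    next
      case (Suc k)
      have "\<rho> (a [^] Suc k) *\<^sub>v v = (\<rho> (a [^] k) * \<rho> a) *\<^sub>v v" using rm[OF nat_pow_closed[OF a] a] by simp
      also have "\<dots> = \<rho> (a [^] k) *\<^sub>v (\<rho> a *\<^sub>v v)" using assoc_mult_mat_vec[OF rc rc v(1)] by simp
      also have "\<dots> = (-1) \<cdot>\<^sub>v (\<rho> (a [^] k) *\<^sub>v v)" using av mult_mat_vec[OF rc v(1)] by simp
      also have "\<dots> = ((-1)^Suc k) \<cdot>\<^sub>v v" using Suc.IH by (simp add: smult_smult_assoc)
      finally show ?case .
    qed
    have "v = (-1) \<cdot>\<^sub>v v" using pk[of n] rH[OF powH[OF a]] v oddH unfolding n_def by simp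
    then have "v = 0\<^sub>v n"
    proof (intro eq_vecI)
      fix i assume eq: "v = (-1) \<cdot>\<^sub>v v" and i: "i < dim_vec (0\<^sub>v n)"
      have "v $ i = - (v $ i)" using arg_cong[OF eq, of "\<lambda>w. w $ i"] i v by simp
      then show "v $ i = 0\<^sub>v n $ i" using i by simp
    qed (use v in simp)
    then show False using v by simp
  qed
  show ?thesis using rep nt noev by blast
qed

theorem mainTheorem14:
  fixes G :: "('a, 'b) monoid_scheme"
  assumes "group G" and "finite (carrier G)"
  shows "two'_simple G \<longleftrightarrow>
    (\<forall>(d::nat) (\<rho>::'a \<Rightarrow> complex mat). complex_rep G d \<rho> \<and> nontrivial_rep G d \<rho> \<longrightarrow>
        (\<exists>a \<in> carrier G. eigenvalue (\<rho> a) (-1)))"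
  using dir1[OF assms] dir2[OF assms] by blast

end
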